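(* Let $f$ be an automorphism of a finite connected (marked) graph $\Gamma$ such that $\langle f\rangle$ acts freely on $\Gamma$ with a single orbit of vertices. Suppose $s$ and $t$ are edges lying in distinct $\langle f\rangle$-orbits and forming a coherently oriented path of length $2$, meeting at $v=\tau(s)=\iota(t)$. Then there is an $\langle f\rangle$-equivariant Whitehead move (an equivariant expansion followed by an equivariant collapse) sliding $s$ along $t$: after the move and relabelling, the graph and the action are unchanged except that now $\tau(s)=\tau(t)$, and correspondingly $\tau(f^i(s))=\tau(f^i(t))$ for all $i$.
   Context: For an oriented edge $e$, $\iota(e)$ is its initial vertex and $\tau(e)$ its terminal vertex. An equivariant expansion replaces vertices by an $\langle f\rangle$-invariant forest (blow-up), and an equivariant collapse contracts an $\langle f\rangle$-invariant forest; both produce a new marked graph with an automorphism realising the same element of $\mathrm{Out}(F_n)$. *)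

theory Defs
  imports Main
begin

definition is_graph :: "'v set \<Rightarrow> 'e set \<Rightarrow> ('e \<Rightarrow> 'v) \<Rightarrow> ('e \<Rightarrow> 'v) \<Rightarrow> ('e \<Rightarrow> 'e) \<Rightarrow> bool" where
  "is_graph V E \<iota> \<tau> bar \<longleftrightarrow>
     (\<forall>e\<in>E. \<iota> e \<in> V \<and> \<tau> e \<in> V \<and> bar e \<in> E \<and> bar e \<noteq> e \<and> bar (bar e) = e \<and> \<iota> (bar e) = \<tau> e)"

fun epath :: "('e \<Rightarrow> 'v) \<Rightarrow> ('e \<Rightarrow> 'v) \<Rightarrow> 'v \<Rightarrow> 'e list \<Rightarrow> 'v \<Rightarrow> bool" where
  "epath \<iota> \<tau> x [] y = (x = y)"
| "epath \<iota> \<tau> x (e # es) y = (\<iota> e = x \<and> epath \<iota> \<tau> (\<tau> e) es y)"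

definition reduced_path :: "('e \<Rightarrow> 'e) \<Rightarrow> 'e list \<Rightarrow> bool" where
  "reduced_path bar es \<longleftrightarrow> (\<forall>i. Suc i < length es \<longrightarrow> es ! Suc i \<noteq> bar (es ! i))"

definition connected_graph :: "'v set \<Rightarrow> 'e set \<Rightarrow> ('e \<Rightarrow> 'v) \<Rightarrow> ('e \<Rightarrow> 'v) \<Rightarrow> bool" where
  "connected_graph V E \<iota> \<tau> \<longleftrightarrow> (\<forall>x\<in>V. \<forall>y\<in>V. \<exists>es. set es \<subseteq> E \<and> epath \<iota> \<tau> x es y)"

definition is_forest :: "'e set \<Rightarrow> ('e \<Rightarrow> 'v) \<Rightarrow> ('e \<Rightarrow> 'v) \<Rightarrow> ('e \<Rightarrow> 'e) \<Rightarrow> 'e set \<Rightarrow> bool" where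
  "is_forest E \<iota> \<tau> bar F \<longleftrightarrow> F \<subseteq> E \<and> bar ` F \<subseteq> F \<and>
     \<not> (\<exists>x es. es \<noteq> [] \<and> set es \<subseteq> F \<and> epath \<iota> \<tau> x es x \<and> reduced_path bar es)"

definition is_aut :: "'v set \<Rightarrow> 'e set \<Rightarrow> ('e \<Rightarrow> 'v) \<Rightarrow> ('e \<Rightarrow> 'v) \<Rightarrow> ('e \<Rightarrow> 'e)
     \<Rightarrow> ('v \<Rightarrow> 'v) \<Rightarrow> ('e \<Rightarrow> 'e) \<Rightarrow> bool" where
  "is_aut V E \<iota> \<tau> bar fV fE \<longleftrightarrow> bij_betw fV V V \<and> bij_betw fE E E \<and>
     (\<forall>e\<in>E. \<iota> (fE e) = fV (\<iota> e) \<and> \<tau> (fE e) = fV (\<tau> e) \<and> fE (bar e) = bar (fE e))"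

text \<open>The cyclic group generated by the automorphism acts freely: a power of f that
  fixes a vertex, or fixes or inverts an edge, is the identity.  (Since the graph is
  finite, f has finite order, so natural-number powers exhaust the group.)\<close>
definition acts_freely :: "'v set \<Rightarrow> 'e set \<Rightarrow> ('e \<Rightarrow> 'e) \<Rightarrow> ('v \<Rightarrow> 'v) \<Rightarrow> ('e \<Rightarrow> 'e) \<Rightarrow> bool" where
  "acts_freely V E bar fV fE \<longleftrightarrow> (\<forall>k::nat.
     ((\<exists>x\<in>V. (fV ^^ k) x = x) \<or> (\<exists>e\<in>E. (fE ^^ k) e = e \<or> (fE ^^ k) e = bar e))
     \<longrightarrow> (\<forall>x\<in>V. (fV ^^ k) x = x) \<and> (\<forall>e\<in>E. (fE ^^ k) e = e))"

text \<open>Equivariant collapse: the graph (V',E',...) with automorphism (fV',fE') is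
  (isomorphic, via pV and pE, to) the quotient of (V,E,...) with automorphism (gV,gE)
  obtained by collapsing each component of the forest F to a point, compatibly
  with the automorphisms.\<close>
definition eq_collapse ::
  "'a set \<Rightarrow> 'b set \<Rightarrow> ('b \<Rightarrow> 'a) \<Rightarrow> ('b \<Rightarrow> 'a) \<Rightarrow> ('b \<Rightarrow> 'b) \<Rightarrow> ('a \<Rightarrow> 'a) \<Rightarrow> ('b \<Rightarrow> 'b)
   \<Rightarrow> 'b set
   \<Rightarrow> 'v set \<Rightarrow> 'e set \<Rightarrow> ('e \<Rightarrow> 'v) \<Rightarrow> ('e \<Rightarrow> 'v) \<Rightarrow> ('e \<Rightarrow> 'e) \<Rightarrow> ('v \<Rightarrow> 'v) \<Rightarrow> ('e \<Rightarrow> 'e)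
   \<Rightarrow> ('a \<Rightarrow> 'v) \<Rightarrow> ('b \<Rightarrow> 'e) \<Rightarrow> bool" where
  "eq_collapse VD ED \<iota>D \<tau>D barD gV gE F V E \<iota> \<tau> bar fV fE pV pE \<longleftrightarrow>
     pV ` VD = V \<and>
     (\<forall>x\<in>VD. \<forall>y\<in>VD. pV x = pV y \<longleftrightarrow> (\<exists>es. set es \<subseteq> F \<and> epath \<iota>D \<tau>D x es y)) \<and>
     bij_betw pE (ED - F) E \<and>
     (\<forall>e\<in>ED - F. \<iota> (pE e) = pV (\<iota>D e) \<and> \<tau> (pE e) = pV (\<tau>D e) \<and> bar (pE e) = pE (barD e)) \<and>
     (\<forall>x\<in>VD. pV (gV x) = fV (pV x)) \<and>
     (\<forall>e\<in>ED - F. pE (gE e) = fE (pE e))"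

text \<open>An equivariant Whitehead move from (V,E,\<iota>,\<tau>,bar) with automorphism (fV,fE)
  to (V',E',\<iota>',\<tau>',bar') with automorphism (fV',fE'): an equivariant expansion of the
  first graph to a finite graph D (with automorphism g), followed by an equivariant
  collapse of D to the second graph.  Vertices and edges of D are represented by natural numbers (every
  finite graph is isomorphic to such a one).\<close>
definition eq_whitehead_move ::
  "'v set \<Rightarrow> 'e set \<Rightarrow> ('e \<Rightarrow> 'v) \<Rightarrow> ('e \<Rightarrow> 'v) \<Rightarrow> ('e \<Rightarrow> 'e) \<Rightarrow> ('v \<Rightarrow> 'v) \<Rightarrow> ('e \<Rightarrow> 'e)
   \<Rightarrow> 'w set \<Rightarrow> 'f set \<Rightarrow> ('f \<Rightarrow> 'w) \<Rightarrow> ('f \<Rightarrow> 'w) \<Rightarrow> ('f \<Rightarrow> 'f) \<Rightarrow> ('w \<Rightarrow> 'w) \<Rightarrow> ('f \<Rightarrow> 'f)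
   \<Rightarrow> bool" where
  "eq_whitehead_move V E \<iota> \<tau> bar fV fE V' E' \<iota>' \<tau>' bar' fV' fE' \<longleftrightarrow>
     (\<exists>(VD::nat set) (ED::nat set) \<iota>D \<tau>D barD gV gE F1 F2 pV1 pE1 pV2 pE2.
        finite VD \<and> finite ED \<and> is_graph VD ED \<iota>D \<tau>D barD \<and>
        is_aut VD ED \<iota>D \<tau>D barD gV gE \<and>
        is_forest ED \<iota>D \<tau>D barD F1 \<and> gE ` F1 \<subseteq> F1 \<and>
        is_forest ED \<iota>D \<tau>D barD F2 \<and> gE ` F2 \<subseteq> F2 \<and>
        eq_collapse VD ED \<iota>D \<tau>D barD gV gE F1 V E \<iota> \<tau> bar fV fE pV1 pE1 \<and>
        eq_collapse VD ED \<iota>D \<tau>D barD gV gE F2 V' E' \<iota>' \<tau>' bar' fV' fE' pV2 pE2)"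

end

theory Submission
  imports Defs
begin


lemma epath_append:
  "epath i t x (xs @ ys) z \<longleftrightarrow> (\<exists>y. epath i t x xs y \<and> epath i t y ys z)"
  by (induction xs arbitrary: x) auto

lemma epath_nth:
  "epath i t x es y \<Longrightarrow> Suc k < length es \<Longrightarrow> t (es ! k) = i (es ! Suc k)"
proof (induction es arbitrary: x k)
  case Nil then show ?case by simp
next
  case (Cons e es)
  show ?case
  proof (cases k)
    case 0 with Cons show ?thesis by (cases es) auto
  next
    case (Suc m) with Cons show ?thesis by auto
  qed
qed

lemma epath_hd: "epath i t x es y \<Longrightarrow> es \<noteq> [] \<Longrightarrow> i (es ! 0) = x"
  by (cases es) auto

lemma epath_last: "epath i t x es y \<Longrightarrow> es \<noteq> [] \<Longrightarrow> t (es ! (length es - 1)) = y"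
proof (induction es arbitrary: x)
  case Nil then show ?case by simp
next
  case (Cons e es) then show ?case by (cases es) auto
qed

lemma epath_p_eq:
  assumes "\<forall>e\<in>F. pV (i e) = pV (t e)"
  shows "epath i t x es y \<Longrightarrow> set es \<subseteq> F \<Longrightarrow> pV x = pV y"
  using assms by (induction es arbitrary: x) auto

lemma leaf_forest:
  assumes gr: "is_graph VD ED i t bar" and FE: "F \<subseteq> ED" and Fb: "bar ` F \<subseteq> F"
    and one: "\<forall>e\<in>F. (i e \<in> W) \<noteq> (t e \<in> W)"
    and uniq: "\<forall>e\<in>F. \<forall>e'\<in>F. i e \<in> W \<longrightarrow> i e' = i e \<longrightarrow> e' = e"
  shows "is_forest ED i t bar F"
  unfolding is_forest_def
proof (intro conjI FE Fb notI)
  assume "\<exists>x es. es \<noteq> [] \<and> set es \<subseteq> F \<and> epath i t x es x \<and> reduced_path bar es"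
  then obtain x es where ne: "es \<noteq> []" and sF: "set es \<subseteq> F" and p: "epath i t x es x"
    and red: "reduced_path bar es" by blast
  have inF: "k < length es \<Longrightarrow> es ! k \<in> F" for k using sF by auto
  have barF: "e \<in> F \<Longrightarrow> bar e \<in> F" for e using Fb by auto
  have gr': "e \<in> F \<Longrightarrow> bar (bar e) = e \<and> i (bar e) = t e" for e using gr FE unfolding is_graph_def by auto
  have claim: "i (es ! Suc k) \<notin> W" if "Suc k < length es" for k
  proof
    assume W: "i (es ! Suc k) \<in> W"
    have "t (es ! k) = i (es ! Suc k)" using epath_nth[OF p that] .
    have e1: "es ! k \<in> F" "es ! Suc k \<in> F" using inF that by auto
    have "i (bar (es ! k)) = i (es ! Suc k)" using gr' e1 \<open>t (es ! k) = _\<close> by simp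
    then have "es ! Suc k = bar (es ! k)" using uniq e1 barF W by metis
    then show False using red that unfolding reduced_path_def by blast
  qed
  have c0: "Suc k < length es \<Longrightarrow> k = 0 \<and> i (es ! 0) \<in> W" for k
  proof -
    assume a: "Suc k < length es"
    have "t (es ! k) \<notin> W" using claim[OF a] epath_nth[OF p a] by simp
    then have "i (es ! k) \<in> W" using one inF a by fastforce
    moreover have "k = 0"
    proof (rule ccontr)
      assume "k \<noteq> 0" then obtain m where "k = Suc m" by (cases k) auto
      then show False using claim[of m] a \<open>i (es ! k) \<in> W\<close> by auto
    qed
    ultimately show ?thesis by simp
  qed
  have hd: "i (es ! 0) = x" using epath_hd[OF p ne] .
  have lst: "t (es ! (length es - 1)) = x" using epath_last[OF p ne] .
  consider "length es = 1" | "length es = 2" | "length es \<ge> 3" proof -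
    have "length es \<noteq> 0" using ne by simp
    then show "(length es = 1 \<Longrightarrow> thesis) \<Longrightarrow> (length es = 2 \<Longrightarrow> thesis) \<Longrightarrow> (length es \<ge> 3 \<Longrightarrow> thesis) \<Longrightarrow> thesis" by linarith
  qed
  then show False
  proof cases
    case 1
    then show ?thesis using hd lst one inF[of 0] by auto
  next
    case 2
    have w0: "i (es ! 0) \<in> W" using c0[of 0] 2 by auto
    have t1: "t (es ! 1) = x" using lst 2 by simp
    have F01: "es ! 0 \<in> F" "es ! 1 \<in> F" using inF 2 by auto
    have "i (bar (es ! 1)) = i (es ! 0)" using gr' F01 t1 hd by simp
    then have "bar (es ! 1) = es ! 0" using uniq F01 barF w0 by metis
    then have "es ! Suc 0 = bar (es ! 0)" using gr' F01 by force
    then show ?thesis using red 2 unfolding reduced_path_def by force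
  next
    case 3
    then show ?thesis using c0[of 1] by auto
  qed
qed

lemma leaf_paths:
  assumes gr: "is_graph VD ED i t bar" and FE: "F \<subseteq> ED" and Fb: "bar ` F \<subseteq> F"
    and one: "\<forall>e\<in>F. (i e \<in> W) \<noteq> (t e \<in> W)"
    and ex: "\<forall>x\<in>VD. x \<in> W \<longrightarrow> (\<exists>e\<in>F. i e = x)"
    and peq: "\<forall>e\<in>F. pV (i e) = pV (t e)"
    and pinj: "\<forall>x\<in>VD. \<forall>y\<in>VD. x \<notin> W \<longrightarrow> y \<notin> W \<longrightarrow> pV x = pV y \<longrightarrow> x = y"
  shows "\<forall>x\<in>VD. \<forall>y\<in>VD. pV x = pV y \<longleftrightarrow> (\<exists>es. set es \<subseteq> F \<and> epath i t x es y)"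
proof (intro ballI iffI)
  fix x y assume "x \<in> VD" "y \<in> VD" "\<exists>es. set es \<subseteq> F \<and> epath i t x es y"
  then show "pV x = pV y" using epath_p_eq[of F pV i t, OF peq] by blast
next
  have red: "\<exists>x'\<in>VD. x' \<notin> W \<and> pV x' = pV x \<and> (\<exists>es. set es \<subseteq> F \<and> epath i t x es x')
      \<and> (\<exists>es. set es \<subseteq> F \<and> epath i t x' es x)" if x: "x \<in> VD" for x
  proof (cases "x \<in> W")
    case False then show ?thesis using x by (intro bexI[of _ x]) (auto intro: exI[of _ "[]"])
  next
    case True
    then obtain e where e: "e \<in> F" "i e = x" using ex x by blast
    have g: "t e \<in> VD" "bar e \<in> F" "i (bar e) = t e" "t (bar e) = i e"
      using gr FE Fb e unfolding is_graph_def by (auto, metis subsetD)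
    have p1: "set [e] \<subseteq> F \<and> epath i t x [e] (t e)" using e by simp
    have p2: "set [bar e] \<subseteq> F \<and> epath i t (t e) [bar e] x" using e g by simp
    have "t e \<notin> W" using True one e by auto
    moreover have "pV (t e) = pV x" using peq e by metis
    ultimately show ?thesis using p1 p2 g(1) by blast
  qed
  fix x y assume x: "x \<in> VD" and y: "y \<in> VD" and eq: "pV x = pV y"
  obtain x' es1 where x': "x' \<in> VD" "x' \<notin> W" "pV x' = pV x" "set es1 \<subseteq> F" "epath i t x es1 x'"
    using red[OF x] by blast
  obtain y' es2 where y': "y' \<in> VD" "y' \<notin> W" "pV y' = pV y" "set es2 \<subseteq> F" "epath i t y' es2 y"
    using red[OF y] by blast
  have "x' = y'" using pinj x' y' eq by metis
  then show "\<exists>es. set es \<subseteq> F \<and> epath i t x es y"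
    using x' y' by (intro exI[of _ "es1 @ es2"]) (auto simp: epath_append)
qed




lemma epath_transport:
  assumes hV: "inj_on hV VD" and hE: "inj_on hE ED"
    and cl: "\<forall>e\<in>ED. i e \<in> VD \<and> t e \<in> VD"
  shows "set es \<subseteq> ED \<Longrightarrow> x \<in> VD \<Longrightarrow> y \<in> VD \<Longrightarrow>
    epath (hV \<circ> i \<circ> inv_into ED hE) (hV \<circ> t \<circ> inv_into ED hE) (hV x) (map hE es) (hV y)
     \<longleftrightarrow> epath i t x es y"
proof (induction es arbitrary: x)
  case Nil then show ?case using hV by (auto dest: inj_onD)
next
  case (Cons e es)
  have e: "e \<in> ED" using Cons by simp
  have r: "inv_into ED hE (hE e) = e" using hE e by simp
  have "hV (i e) = hV x \<longleftrightarrow> i e = x" using hV cl e Cons.prems by (auto dest: inj_onD)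
  then show ?case using Cons cl e r by simp
qed

lemma map_inv_helper:
  assumes "inj_on hE ED" "F \<subseteq> ED"
  shows "set es' \<subseteq> hE ` F \<Longrightarrow> set (map (inv_into ED hE) es') \<subseteq> F \<and> es' = map hE (map (inv_into ED hE) es')"
proof (induction es')
  case Nil then show ?case by simp
next
  case (Cons a es')
  then obtain e where "e \<in> F" "a = hE e" by auto
  then show ?case using Cons assms by auto
qed

lemma transport_graph:
  assumes g: "is_graph VD ED i t bar" and hV: "inj_on hV VD" and hE: "inj_on hE ED"
  shows "is_graph (hV ` VD) (hE ` ED) (hV \<circ> i \<circ> inv_into ED hE) (hV \<circ> t \<circ> inv_into ED hE)
     (hE \<circ> bar \<circ> inv_into ED hE)"
  using g hE unfolding is_graph_def by (auto dest: inj_onD)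

lemma transport_aut:
  assumes g: "is_graph VD ED i t bar" and a: "is_aut VD ED i t bar gV gE"
    and hV: "inj_on hV VD" and hE: "inj_on hE ED"
  shows "is_aut (hV ` VD) (hE ` ED) (hV \<circ> i \<circ> inv_into ED hE) (hV \<circ> t \<circ> inv_into ED hE)
     (hE \<circ> bar \<circ> inv_into ED hE) (hV \<circ> gV \<circ> inv_into VD hV) (hE \<circ> gE \<circ> inv_into ED hE)"
proof -
  have bV: "bij_betw hV VD (hV ` VD)" using hV by (simp add: bij_betw_imageI)
  have bE: "bij_betw hE ED (hE ` ED)" using hE by (simp add: bij_betw_imageI)
  have b1: "bij_betw (hV \<circ> gV \<circ> inv_into VD hV) (hV ` VD) (hV ` VD)"
    using a bV bij_betw_inv_into[OF bV] unfolding is_aut_def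
    by (metis bij_betw_trans comp_assoc)
  have b2: "bij_betw (hE \<circ> gE \<circ> inv_into ED hE) (hE ` ED) (hE ` ED)"
    using a bE bij_betw_inv_into[OF bE] unfolding is_aut_def
    by (metis bij_betw_trans comp_assoc)
  have gEE: "e \<in> ED \<Longrightarrow> gE e \<in> ED" for e using a unfolding is_aut_def bij_betw_def by auto
  have cl: "e \<in> ED \<Longrightarrow> i e \<in> VD \<and> t e \<in> VD \<and> bar e \<in> ED" for e using g unfolding is_graph_def by auto
  show ?thesis unfolding is_aut_def
    using b1 b2 a hV hE gEE cl unfolding is_aut_def by auto
qed

lemma transport_forest:
  assumes g: "is_graph VD ED i t bar" and f: "is_forest ED i t bar F"
    and hV: "inj_on hV VD" and hE: "inj_on hE ED"
  shows "is_forest (hE ` ED) (hV \<circ> i \<circ> inv_into ED hE) (hV \<circ> t \<circ> inv_into ED hE)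
     (hE \<circ> bar \<circ> inv_into ED hE) (hE ` F)"
proof -
  have FE: "F \<subseteq> ED" using f unfolding is_forest_def by auto
  have cl: "\<forall>e\<in>ED. i e \<in> VD \<and> t e \<in> VD" using g unfolding is_graph_def by auto
  have Fb: "bar ` F \<subseteq> F" using f unfolding is_forest_def by auto
  have inv: "e \<in> ED \<Longrightarrow> inv_into ED hE (hE e) = e" for e using hE by simp
  show ?thesis unfolding is_forest_def
  proof (intro conjI notI)
    show "hE ` F \<subseteq> hE ` ED" using FE by auto
    show "(hE \<circ> bar \<circ> inv_into ED hE) ` hE ` F \<subseteq> hE ` F" using Fb FE inv by (auto simp: image_iff) (metis image_subset_iff subsetD)
  next
    assume "\<exists>x es. es \<noteq> [] \<and> set es \<subseteq> hE ` F \<and>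
       epath (hV \<circ> i \<circ> inv_into ED hE) (hV \<circ> t \<circ> inv_into ED hE) x es x \<and>
       reduced_path (hE \<circ> bar \<circ> inv_into ED hE) es"
    then obtain x es' where ne: "es' \<noteq> []" and s: "set es' \<subseteq> hE ` F"
      and p: "epath (hV \<circ> i \<circ> inv_into ED hE) (hV \<circ> t \<circ> inv_into ED hE) x es' x"
      and r: "reduced_path (hE \<circ> bar \<circ> inv_into ED hE) es'" by blast
    define es where "es = map (inv_into ED hE) es'"
    have sF: "set es \<subseteq> F" and es': "es' = map hE es" unfolding es_def using map_inv_helper[OF hE FE s] by auto
    have x: "x = hV (i (hd es))"
      using epath_hd[OF p ne] es' ne sF FE inv by (cases es) auto
    have xV: "i (hd es) \<in> VD" using cl sF FE ne es' by (cases es) auto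
    have pp: "epath i t (i (hd es)) es (i (hd es))"
      using epath_transport[OF hV hE cl, of es "i (hd es)" "i (hd es)"] p x xV sF FE es' by auto
    have "reduced_path bar es"
      unfolding reduced_path_def
    proof (intro allI impI notI)
      fix k assume k: "Suc k < length es" and eq: "es ! Suc k = bar (es ! k)"
      have "es' ! Suc k = (hE \<circ> bar \<circ> inv_into ED hE) (es' ! k)"
      proof -
        have "k < length es" using k by simp
        then have "es ! k \<in> ED" using sF FE nth_mem by blast
        then show ?thesis using es' k eq inv by auto
      qed
      then show False using r k es' unfolding reduced_path_def by auto
    qed
    then show False using f ne es' sF pp unfolding is_forest_def by auto
  qed
qed

lemma transport_collapse:
  assumes g: "is_graph VD ED i t bar" and c: "eq_collapse VD ED i t bar gV gE F V E i' t' bar' fV fE pV pE"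
    and FE: "F \<subseteq> ED" and gVV: "\<forall>x\<in>VD. gV x \<in> VD" and gEE: "\<forall>e\<in>ED. gE e \<in> ED"
    and hV: "inj_on hV VD" and hE: "inj_on hE ED"
  shows "eq_collapse (hV ` VD) (hE ` ED) (hV \<circ> i \<circ> inv_into ED hE) (hV \<circ> t \<circ> inv_into ED hE)
     (hE \<circ> bar \<circ> inv_into ED hE) (hV \<circ> gV \<circ> inv_into VD hV) (hE \<circ> gE \<circ> inv_into ED hE) (hE ` F)
     V E i' t' bar' fV fE (pV \<circ> inv_into VD hV) (pE \<circ> inv_into ED hE)"
proof -
  have cl: "\<forall>e\<in>ED. i e \<in> VD \<and> t e \<in> VD" using g unfolding is_graph_def by auto
  have cl2: "e \<in> ED \<Longrightarrow> bar e \<in> ED" for e using g unfolding is_graph_def by auto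
  have invE: "e \<in> ED \<Longrightarrow> inv_into ED hE (hE e) = e" for e using hE by simp
  have invV: "x \<in> VD \<Longrightarrow> inv_into VD hV (hV x) = x" for x using hV by simp
  have diff: "hE ` ED - hE ` F = hE ` (ED - F)" using hE FE by (auto dest: inj_onD)
  have bE: "bij_betw hE (ED - F) (hE ` (ED - F))" using hE
    by (meson Diff_subset bij_betw_imageI inj_on_subset)
  have b: "bij_betw (pE \<circ> inv_into ED hE) (hE ` ED - hE ` F) E"
  proof -
    have "bij_betw (inv_into (ED - F) hE) (hE ` (ED - F)) (ED - F)" using bij_betw_inv_into[OF bE] .
    moreover have "\<forall>y\<in>hE ` (ED - F). inv_into (ED - F) hE y = inv_into ED hE y"
      using invE inv_into_f_f[OF inj_on_subset[OF hE Diff_subset]] by auto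
    ultimately have "bij_betw (inv_into ED hE) (hE ` (ED - F)) (ED - F)"
      using bij_betw_cong by metis
    then show ?thesis using c diff unfolding eq_collapse_def by (metis bij_betw_trans)
  qed
  have paths: "\<forall>x'\<in>hV ` VD. \<forall>y'\<in>hV ` VD. (pV \<circ> inv_into VD hV) x' = (pV \<circ> inv_into VD hV) y' \<longleftrightarrow>
     (\<exists>es. set es \<subseteq> hE ` F \<and> epath (hV \<circ> i \<circ> inv_into ED hE) (hV \<circ> t \<circ> inv_into ED hE) x' es y')"
  proof (intro ballI)
    fix x' y' assume "x' \<in> hV ` VD" "y' \<in> hV ` VD"
    then obtain x y where xy: "x \<in> VD" "y \<in> VD" "x' = hV x" "y' = hV y" by auto
    have "(\<exists>es. set es \<subseteq> hE ` F \<and> epath (hV \<circ> i \<circ> inv_into ED hE) (hV \<circ> t \<circ> inv_into ED hE) x' es y')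
       \<longleftrightarrow> (\<exists>es. set es \<subseteq> F \<and> epath i t x es y)"
    proof
      assume "\<exists>es. set es \<subseteq> hE ` F \<and> epath (hV \<circ> i \<circ> inv_into ED hE) (hV \<circ> t \<circ> inv_into ED hE) x' es y'"
      then obtain es' where s: "set es' \<subseteq> hE ` F" and p: "epath (hV \<circ> i \<circ> inv_into ED hE) (hV \<circ> t \<circ> inv_into ED hE) x' es' y'" by blast
      define es where "es = map (inv_into ED hE) es'"
      have sF: "set es \<subseteq> F" and es': "es' = map hE es" unfolding es_def using map_inv_helper[OF hE FE s] by auto
      show "\<exists>es. set es \<subseteq> F \<and> epath i t x es y"
        using epath_transport[OF hV hE cl, of es x y] p sF FE es' xy by auto
    next
      assume "\<exists>es. set es \<subseteq> F \<and> epath i t x es y"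
      then obtain es where "set es \<subseteq> F" "epath i t x es y" by blast
      then show "\<exists>es. set es \<subseteq> hE ` F \<and> epath (hV \<circ> i \<circ> inv_into ED hE) (hV \<circ> t \<circ> inv_into ED hE) x' es y'"
        using epath_transport[OF hV hE cl, of es x y] FE xy by (intro exI[of _ "map hE es"]) auto
    qed
    then show "(pV \<circ> inv_into VD hV) x' = (pV \<circ> inv_into VD hV) y' \<longleftrightarrow>
     (\<exists>es. set es \<subseteq> hE ` F \<and> epath (hV \<circ> i \<circ> inv_into ED hE) (hV \<circ> t \<circ> inv_into ED hE) x' es y')"
      using c xy invV unfolding eq_collapse_def by auto
  qed
  have gV: "\<forall>x\<in>VD. pV (gV x) = fV (pV x)" and gE: "\<forall>e\<in>ED - F. pE (gE e) = fE (pE e)"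
    and ie: "\<forall>e\<in>ED - F. i' (pE e) = pV (i e) \<and> t' (pE e) = pV (t e) \<and> bar' (pE e) = pE (bar e)"
    and im: "pV ` VD = V"
    using c unfolding eq_collapse_def by auto
  have im2: "(pV \<circ> inv_into VD hV) ` hV ` VD = V" using im invV by (auto simp: image_iff)
  show ?thesis unfolding eq_collapse_def
    using im2 paths b gV gE ie invV invE cl cl2 diff gVV gEE by auto
qed

lemma transport_whitehead:
  fixes VD :: "'a set" and ED :: "'b set"
  assumes fin: "finite VD" "finite ED" and g: "is_graph VD ED iD tD barD"
    and a: "is_aut VD ED iD tD barD gV gE"
    and f1: "is_forest ED iD tD barD F1" "gE ` F1 \<subseteq> F1"
    and f2: "is_forest ED iD tD barD F2" "gE ` F2 \<subseteq> F2"
    and c1: "eq_collapse VD ED iD tD barD gV gE F1 V E i t bar fV fE pV1 pE1"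
    and c2: "eq_collapse VD ED iD tD barD gV gE F2 V' E' i' t' bar' fV' fE' pV2 pE2"
  shows "eq_whitehead_move V E i t bar fV fE V' E' i' t' bar' fV' fE'"
proof -
  obtain hV :: "'a \<Rightarrow> nat" where hV: "inj_on hV VD" using fin finite_imp_inj_to_nat_seg by blast
  obtain hE :: "'b \<Rightarrow> nat" where hE: "inj_on hE ED" using fin finite_imp_inj_to_nat_seg by blast
  have F1E: "F1 \<subseteq> ED" and F2E: "F2 \<subseteq> ED" using f1 f2 unfolding is_forest_def by auto
  have invE: "e \<in> ED \<Longrightarrow> inv_into ED hE (hE e) = e" for e using hE by simp
  have gEE: "e \<in> ED \<Longrightarrow> gE e \<in> ED" for e using a unfolding is_aut_def bij_betw_def by auto
  have gEE': "\<forall>e\<in>ED. gE e \<in> ED" using gEE by auto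
  have gVV: "\<forall>x\<in>VD. gV x \<in> VD" using a unfolding is_aut_def bij_betw_def by auto
  have i1: "(hE \<circ> gE \<circ> inv_into ED hE) ` hE ` F1 \<subseteq> hE ` F1"
  proof
    fix y assume "y \<in> (hE \<circ> gE \<circ> inv_into ED hE) ` hE ` F1"
    then obtain x where x: "x \<in> F1" "y = hE (gE (inv_into ED hE (hE x)))" by auto
    then have "x \<in> ED" using F1E by auto
    then show "y \<in> hE ` F1" using x invE f1(2) by auto
  qed
  have i2: "(hE \<circ> gE \<circ> inv_into ED hE) ` hE ` F2 \<subseteq> hE ` F2"
  proof
    fix y assume "y \<in> (hE \<circ> gE \<circ> inv_into ED hE) ` hE ` F2"
    then obtain x where x: "x \<in> F2" "y = hE (gE (inv_into ED hE (hE x)))" by auto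
    then have "x \<in> ED" using F2E by auto
    then show "y \<in> hE ` F2" using x invE f2(2) by auto
  qed
  show ?thesis unfolding eq_whitehead_move_def
    apply (rule exI[of _ "hV ` VD"], rule exI[of _ "hE ` ED"])
    apply (rule exI[of _ "hV \<circ> iD \<circ> inv_into ED hE"], rule exI[of _ "hV \<circ> tD \<circ> inv_into ED hE"])
    apply (rule exI[of _ "hE \<circ> barD \<circ> inv_into ED hE"])
    apply (rule exI[of _ "hV \<circ> gV \<circ> inv_into VD hV"], rule exI[of _ "hE \<circ> gE \<circ> inv_into ED hE"])
    apply (rule exI[of _ "hE ` F1"], rule exI[of _ "hE ` F2"])
    apply (rule exI[of _ "pV1 \<circ> inv_into VD hV"], rule exI[of _ "pE1 \<circ> inv_into ED hE"])
    apply (rule exI[of _ "pV2 \<circ> inv_into VD hV"], rule exI[of _ "pE2 \<circ> inv_into ED hE"])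
    using fin transport_graph[OF g hV hE] transport_aut[OF g a hV hE]
      transport_forest[OF g f1(1) hV hE] transport_forest[OF g f2(1) hV hE] i1 i2
      transport_collapse[OF g c1 F1E gVV gEE' hV hE] transport_collapse[OF g c2 F2E gVV gEE' hV hE]
    by simp
qed




locale wh_ctx =
  fixes V :: "'v set" and E :: "'e set" and \<iota> \<tau> :: "'e \<Rightarrow> 'v" and bar :: "'e \<Rightarrow> 'e"
    and fV :: "'v \<Rightarrow> 'v" and fE :: "'e \<Rightarrow> 'e" and s t :: 'e
  assumes fin: "finite V" "finite E"
    and gr: "is_graph V E \<iota> \<tau> bar"
    and aut: "is_aut V E \<iota> \<tau> bar fV fE"
    and free: "acts_freely V E bar fV fE"
    and one_orbit: "\<exists>v0\<in>V. V = {(fV ^^ k) v0 | k. True}"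
    and st: "s \<in> E" "t \<in> E"
    and distinct_orbits: "\<forall>k. (fE ^^ k) t \<noteq> s \<and> (fE ^^ k) (bar t) \<noteq> s"
    and path: "\<tau> s = \<iota> t"
begin

lemma grE: "e \<in> E \<Longrightarrow> \<iota> e \<in> V \<and> \<tau> e \<in> V \<and> bar e \<in> E \<and> bar e \<noteq> e \<and> bar (bar e) = e \<and> \<iota> (bar e) = \<tau> e \<and> \<tau> (bar e) = \<iota> e"
  using gr unfolding is_graph_def by (metis)

lemma fE_E: "e \<in> E \<Longrightarrow> fE e \<in> E" using aut unfolding is_aut_def bij_betw_def by auto
lemma fV_V: "x \<in> V \<Longrightarrow> fV x \<in> V" using aut unfolding is_aut_def bij_betw_def by auto
lemma fcomm: "e \<in> E \<Longrightarrow> \<iota> (fE e) = fV (\<iota> e) \<and> \<tau> (fE e) = fV (\<tau> e) \<and> fE (bar e) = bar (fE e)"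
  using aut unfolding is_aut_def by auto

lemma fEk_E: "e \<in> E \<Longrightarrow> (fE ^^ k) e \<in> E" by (induction k) (auto simp: fE_E)
lemma fVk_V: "x \<in> V \<Longrightarrow> (fV ^^ k) x \<in> V" by (induction k) (auto simp: fV_V)
lemma fkcomm: "e \<in> E \<Longrightarrow> \<iota> ((fE ^^ k) e) = (fV ^^ k) (\<iota> e) \<and> \<tau> ((fE ^^ k) e) = (fV ^^ k) (\<tau> e)
   \<and> (fE ^^ k) (bar e) = bar ((fE ^^ k) e)"
  by (induction k) (auto simp: fcomm fEk_E)

lemma inj_fVk: "inj_on (fV ^^ k) V"
proof (induction k)
  case 0 then show ?case by simp
next
  case (Suc k)
  have "inj_on fV V" using aut unfolding is_aut_def bij_betw_def by auto
  moreover have "(fV ^^ k) ` V \<subseteq> V" using fVk_V by auto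
  ultimately show ?case using Suc unfolding inj_on_def by (simp add: image_subset_iff)
qed

lemma period: "\<exists>N>0. (\<forall>x\<in>V. (fV ^^ N) x = x) \<and> (\<forall>e\<in>E. (fE ^^ N) e = e)"
proof -
  obtain v0 where v0: "v0 \<in> V" using one_orbit by blast
  have "\<not> inj (\<lambda>k. (fV ^^ k) v0)"
  proof
    assume i: "inj (\<lambda>k. (fV ^^ k) v0)"
    have "range (\<lambda>k. (fV ^^ k) v0) \<subseteq> V" using fVk_V v0 by auto
    then have "finite (range (\<lambda>k. (fV ^^ k) v0))" using fin finite_subset by blast
    then have "finite (UNIV :: nat set)" using finite_imageD i by blast
    then show False by simp
  qed
  then obtain i j where ij: "i \<noteq> j" "(fV ^^ i) v0 = (fV ^^ j) v0" unfolding inj_def by blast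
  have "\<exists>a b. a < b \<and> (fV ^^ a) v0 = (fV ^^ b) v0"
  proof (cases "i < j")
    case True then show ?thesis using ij by blast
  next
    case False then have "j < i" using ij by simp
    then show ?thesis using ij by metis
  qed
  then obtain a b where ab: "a < b" "(fV ^^ a) v0 = (fV ^^ b) v0" by blast
  have "(fV ^^ a) ((fV ^^ (b - a)) v0) = (fV ^^ a) v0"
    using ab by (simp add: funpow_add[symmetric, THEN fun_cong, simplified])
  then have fix0: "(fV ^^ (b - a)) v0 = v0" using inj_fVk[of a] v0 fVk_V unfolding inj_on_def by blast
  then have "(\<forall>x\<in>V. (fV ^^ (b - a)) x = x) \<and> (\<forall>e\<in>E. (fE ^^ (b - a)) e = e)"
    using free v0 unfolding acts_freely_def by blast
  then show ?thesis using ab by (intro exI[of _ "b - a"]) auto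
qed

definition N where "N = (SOME N. N > 0 \<and> (\<forall>x\<in>V. (fV ^^ N) x = x) \<and> (\<forall>e\<in>E. (fE ^^ N) e = e))"

lemma N: "N > 0" "x \<in> V \<Longrightarrow> (fV ^^ N) x = x" "e \<in> E \<Longrightarrow> (fE ^^ N) e = e"
  using someI_ex[OF period] unfolding N_def by auto

lemma NmV: "x \<in> V \<Longrightarrow> (fV ^^ (N * m)) x = x"
  by (induction m) (auto simp: funpow_add N fVk_V)
lemma NmE: "e \<in> E \<Longrightarrow> (fE ^^ (N * m)) e = e"
  by (induction m) (auto simp: funpow_add N fEk_E)

lemma backE: "e \<in> E \<Longrightarrow> (fE ^^ (k + (N - 1) * j)) ((fE ^^ j) e) = (fE ^^ k) e"
proof -
  assume e: "e \<in> E"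
  have "(N - 1) * j + j = N * j" using N(1) by (cases N) auto
  then have "(fE ^^ (k + (N - 1) * j)) ((fE ^^ j) e) = (fE ^^ k) ((fE ^^ (N * j)) e)"
    by (simp add: funpow_add[symmetric, THEN fun_cong, simplified] add.assoc)
  then show ?thesis using NmE e by simp
qed

lemma backV: "x \<in> V \<Longrightarrow> (fV ^^ (k + (N - 1) * j)) ((fV ^^ j) x) = (fV ^^ k) x"
proof -
  assume e: "x \<in> V"
  have "(N - 1) * j + j = N * j" using N(1) by (cases N) auto
  then have "(fV ^^ (k + (N - 1) * j)) ((fV ^^ j) x) = (fV ^^ k) ((fV ^^ (N * j)) x)"
    by (simp add: funpow_add[symmetric, THEN fun_cong, simplified] add.assoc)
  then show ?thesis using NmV e by simp
qed

lemma vfix: assumes x: "x \<in> V" and eq: "(fV ^^ a) x = (fV ^^ b) x" and e: "e \<in> E"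
  shows "(fE ^^ a) e = (fE ^^ b) e"
proof -
  define c where "c = a + (N - 1) * b"
  have "(fV ^^ c) x = (fV ^^ c) ((fV ^^ 0) x)" by simp
  have "(fV ^^ c) x = (fV ^^ ((N-1)*b)) ((fV ^^ a) x)"
    unfolding c_def by (simp add: funpow_add[symmetric, THEN fun_cong, simplified] add.commute)
  also have "\<dots> = (fV ^^ (0 + (N-1)*b)) ((fV ^^ b) x)" using eq by simp
  also have "\<dots> = x" using backV[OF x, of 0 b] by simp
  finally have "(fV ^^ c) x = x" .
  then have all: "\<forall>e\<in>E. (fE ^^ c) e = e" using free x unfolding acts_freely_def by blast
  have "(fE ^^ b) e = (fE ^^ b) ((fE ^^ c) e)" using all e by simp
  also have "\<dots> = (fE ^^ (a + (N - 1) * b)) ((fE ^^ b) e)"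
    unfolding c_def by (simp add: funpow_add[symmetric, THEN fun_cong, simplified] add.commute add.left_commute)
  also have "\<dots> = (fE ^^ a) e" using backE[OF e] .
  finally show ?thesis by simp
qed

lemma einv: "e \<in> E \<Longrightarrow> (fE ^^ a) e = bar e \<Longrightarrow> False"
  using free grE unfolding acts_freely_def by metis

end



context wh_ctx begin

lemma fpa: "(f ^^ (a + b)) x = (f ^^ b) ((f ^^ a) x)"
  by (metis add.commute comp_apply funpow_add)

lemma back0: "e \<in> E \<Longrightarrow> (fE ^^ ((N - 1) * j)) ((fE ^^ j) e) = e"
  using backE[of e 0 j] by simp

definition S where "S = {(fE ^^ k) s | k. True}"
definition T where "T = {(fE ^^ k) t | k. True}"

lemma S_E: "S \<subseteq> E" unfolding S_def using fEk_E st by auto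
lemma T_E: "T \<subseteq> E" unfolding T_def using fEk_E st by auto

lemma ST: "e \<in> S \<Longrightarrow> e \<in> T \<Longrightarrow> False"
proof -
  assume "e \<in> S" "e \<in> T"
  then obtain j k where a: "e = (fE ^^ j) s" "e = (fE ^^ k) t" unfolding S_def T_def by blast
  have "(fE ^^ (k + (N - 1) * j)) t = (fE ^^ ((N - 1) * j)) ((fE ^^ k) t)" by (rule fpa)
  also have "\<dots> = s" using a back0 st by metis
  finally have "(fE ^^ (k + (N - 1) * j)) t = s" .
  then show False using distinct_orbits by blast
qed

lemma SbT: "e \<in> S \<Longrightarrow> bar e \<in> T \<Longrightarrow> False"
proof -
  assume "e \<in> S" "bar e \<in> T"
  then obtain j k where a: "e = (fE ^^ j) s" "bar e = (fE ^^ k) t" unfolding S_def T_def by blast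
  have "e = bar ((fE ^^ k) t)" using a grE S_E \<open>e \<in> S\<close> by (metis subsetD)
  also have "\<dots> = (fE ^^ k) (bar t)" using fkcomm st by simp
  finally have b: "e = (fE ^^ k) (bar t)" .
  have "(fE ^^ (k + (N - 1) * j)) (bar t) = (fE ^^ ((N - 1) * j)) ((fE ^^ k) (bar t))" by (rule fpa)
  also have "\<dots> = s" using a b back0 st by metis
  finally have "(fE ^^ (k + (N - 1) * j)) (bar t) = s" .
  then show False using distinct_orbits by blast
qed

lemma TbT: "e \<in> T \<Longrightarrow> bar e \<in> T \<Longrightarrow> False"
proof -
  assume "e \<in> T" "bar e \<in> T"
  then obtain j k where a: "e = (fE ^^ j) t" "bar e = (fE ^^ k) t" unfolding T_def by blast
  have "bar e = bar ((fE ^^ j) t)" using a by simp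
  also have "\<dots> = (fE ^^ j) (bar t)" using fkcomm st by simp
  finally have "(fE ^^ k) t = (fE ^^ j) (bar t)" using a by simp
  then have "(fE ^^ (k + (N - 1) * j)) t = bar t"
    using fpa[where f=fE and a=k and b="(N - 1) * j" and x=t] back0[of "bar t" j] grE st by simp
  then show False using einv st by blast
qed

lemma iota_T_inj: "e \<in> T \<Longrightarrow> e' \<in> T \<Longrightarrow> \<iota> e = \<iota> e' \<Longrightarrow> e = e'"
proof -
  assume "e \<in> T" "e' \<in> T" "\<iota> e = \<iota> e'"
  then obtain a b where ab: "e = (fE ^^ a) t" "e' = (fE ^^ b) t" "\<iota> e = \<iota> e'" unfolding T_def by auto
  then have "(fV ^^ a) (\<iota> t) = (fV ^^ b) (\<iota> t)" using fkcomm st by simp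
  then show ?thesis using vfix[of "\<iota> t" a b t] grE st ab by simp
qed

lemma T_surj: "x \<in> V \<Longrightarrow> \<exists>e\<in>T. \<iota> e = x"
proof -
  assume x: "x \<in> V"
  obtain v0 where v0: "v0 \<in> V" "V = {(fV ^^ k) v0 | k. True}" using one_orbit by blast
  obtain k where k: "x = (fV ^^ k) v0" using x v0 by auto
  obtain m where m: "\<iota> t = (fV ^^ m) v0" using grE st v0 by auto
  have "\<iota> ((fE ^^ (k + (N - 1) * m)) t) = x"
    using fkcomm st m backV[OF v0(1), of k m] k by simp
  then show ?thesis unfolding T_def by blast
qed

lemma T_f: "e \<in> T \<Longrightarrow> fE e \<in> T"
  unfolding T_def by (auto, metis funpow.simps(2) comp_apply)
lemma S_f: "e \<in> S \<Longrightarrow> fE e \<in> S"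
  unfolding S_def by (auto, metis funpow.simps(2) comp_apply)

lemma fE_back: "e \<in> E \<Longrightarrow> (fE ^^ (N - 1)) (fE e) = e"
proof -
  assume e: "e \<in> E"
  have "(fE ^^ (N - 1)) (fE e) = (fE ^^ Suc (N - 1)) e" by (simp add: funpow_Suc_right del: funpow.simps)
  also have "Suc (N - 1) = N" using N(1) by simp
  finally show ?thesis using N(3) e by simp
qed

lemma T_f_iff: "e \<in> E \<Longrightarrow> fE e \<in> T \<longleftrightarrow> e \<in> T"
proof
  assume e: "e \<in> E" and "fE e \<in> T"
  then obtain k where "fE e = (fE ^^ k) t" unfolding T_def by auto
  then have "e = (fE ^^ (N - 1 + k)) t" using fE_back[OF e] by (simp add: funpow_add)
  then show "e \<in> T" unfolding T_def by blast
qed (rule T_f)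

lemma S_f_iff: "e \<in> E \<Longrightarrow> fE e \<in> S \<longleftrightarrow> e \<in> S"
proof
  assume e: "e \<in> E" and "fE e \<in> S"
  then obtain k where "fE e = (fE ^^ k) s" unfolding S_def by auto
  then have "e = (fE ^^ (N - 1 + k)) s" using fE_back[OF e] by (simp add: funpow_add)
  then show "e \<in> S" unfolding S_def by blast
qed (rule S_f)

definition tx where "tx x = (SOME e. e \<in> T \<and> \<iota> e = x)"

lemma tx: "x \<in> V \<Longrightarrow> tx x \<in> T \<and> \<iota> (tx x) = x"
  unfolding tx_def using T_surj by (metis (mono_tags, lifting) someI_ex)

lemma tx_iota: "e \<in> T \<Longrightarrow> tx (\<iota> e) = e"
  using tx[of "\<iota> e"] iota_T_inj grE T_E by blast

lemma tx_f: "x \<in> V \<Longrightarrow> tx (fV x) = fE (tx x)"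
proof -
  assume x: "x \<in> V"
  have "fE (tx x) \<in> T" using tx x T_f by blast
  moreover have "\<iota> (fE (tx x)) = fV x" using tx[OF x] fcomm T_E by auto
  ultimately show ?thesis using tx_iota by metis
qed

end



context wh_ctx begin

definition VD :: "('v + 'v) set" where "VD = V <+> V"
definition ED :: "('e + ('v \<times> bool)) set" where "ED = E <+> (V \<times> UNIV)"
definition iD where "iD = case_sum (\<lambda>e. if e \<in> T \<or> bar e \<in> S then Inr (\<iota> e) else Inl (\<iota> e))
   (\<lambda>(x, b). if b then Inr x else Inl x)"
definition tD where "tD = case_sum (\<lambda>e. if e \<in> S \<or> bar e \<in> T then Inr (\<tau> e) else Inl (\<tau> e))
   (\<lambda>(x, b). if b then Inl x else Inr x)"
definition barD where "barD = case_sum (\<lambda>e. Inl (bar e)) (\<lambda>(x, b). Inr (x, \<not> b))"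
definition gV where "gV = map_sum fV fV"
definition gE where "gE = map_sum fE (\<lambda>(x, b). (fV x, b))"
definition F1 :: "('e + ('v \<times> bool)) set" where "F1 = Inr ` (V \<times> UNIV)"
definition F2 :: "('e + ('v \<times> bool)) set" where "F2 = Inl ` (T \<union> bar ` T)"

lemma D_finite: "finite VD" "finite ED"
  unfolding VD_def ED_def using fin by auto

lemma D_graph: "is_graph VD ED iD tD barD"
  unfolding is_graph_def
proof
  fix e assume e: "e \<in> ED"
  show "iD e \<in> VD \<and> tD e \<in> VD \<and> barD e \<in> ED \<and> barD e \<noteq> e \<and> barD (barD e) = e \<and> iD (barD e) = tD e"
  proof (cases e)
    case (Inl a)
    then have a: "a \<in> E" using e unfolding ED_def by auto
    show ?thesis using grE[OF a] Inl unfolding VD_def ED_def iD_def tD_def barD_def by auto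
  next
    case (Inr p)
    then show ?thesis using e unfolding VD_def ED_def iD_def tD_def barD_def by (cases p) auto
  qed
qed

lemma bij_fV: "bij_betw fV V V" and bij_fE: "bij_betw fE E E"
  using aut unfolding is_aut_def by auto

lemma D_aut: "is_aut VD ED iD tD barD gV gE"
proof -
  have iV: "inj_on fV V" "fV ` V = V" and iE: "inj_on fE E" "fE ` E = E"
    using bij_fV bij_fE unfolding bij_betw_def by auto
  have b1: "bij_betw gV VD VD" unfolding bij_betw_def
  proof
    show "inj_on gV VD" unfolding inj_on_def
    proof (intro ballI impI)
      fix x y assume "x \<in> VD" "y \<in> VD" "gV x = gV y"
      then show "x = y" unfolding VD_def gV_def using iV(1) by (cases x; cases y) (auto dest: inj_onD)
    qed
    show "gV ` VD = VD"
    proof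
      show "gV ` VD \<subseteq> VD" unfolding VD_def gV_def using fV_V by auto
      show "VD \<subseteq> gV ` VD"
      proof
        fix x assume x: "x \<in> VD"
        show "x \<in> gV ` VD"
        proof (cases x)
          case (Inl a) then have "a \<in> fV ` V" using x iV unfolding VD_def by auto
          then obtain b where "b \<in> V" "a = fV b" by auto
          then show ?thesis using Inl unfolding VD_def gV_def by (auto intro!: image_eqI[of _ _ "Inl b"])
        next
          case (Inr a) then have "a \<in> fV ` V" using x iV unfolding VD_def by auto
          then obtain b where "b \<in> V" "a = fV b" by auto
          then show ?thesis using Inr unfolding VD_def gV_def by (auto intro!: image_eqI[of _ _ "Inr b"])
        qed
      qed
    qed
  qed
  have b2: "bij_betw gE ED ED" unfolding bij_betw_def
  proof
    show "inj_on gE ED" unfolding inj_on_def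
    proof (intro ballI impI)
      fix x y assume "x \<in> ED" "y \<in> ED" "gE x = gE y"
      then show "x = y" unfolding ED_def gE_def using iV(1) iE(1) by (cases x; cases y) (auto dest: inj_onD)
    qed
    show "gE ` ED = ED"
    proof
      show "gE ` ED \<subseteq> ED" unfolding ED_def gE_def using fV_V fE_E by auto
      show "ED \<subseteq> gE ` ED"
      proof
        fix x assume x: "x \<in> ED"
        show "x \<in> gE ` ED"
        proof (cases x)
          case (Inl a) then have "a \<in> fE ` E" using x iE unfolding ED_def by auto
          then obtain b where "b \<in> E" "a = fE b" by auto
          then show ?thesis using Inl unfolding ED_def gE_def by (auto intro!: image_eqI[of _ _ "Inl b"])
        next
          case (Inr p)
          obtain a c where p: "p = (a, c)" by (cases p)
          then have "a \<in> fV ` V" using x iV Inr unfolding ED_def by auto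
          then obtain b where "b \<in> V" "a = fV b" by auto
          then show ?thesis using Inr p unfolding ED_def gE_def by (auto intro!: image_eqI[of _ _ "Inr (b, c)"])
        qed
      qed
    qed
  qed
  have c: "\<forall>e\<in>ED. iD (gE e) = gV (iD e) \<and> tD (gE e) = gV (tD e) \<and> gE (barD e) = barD (gE e)"
  proof
    fix e assume e: "e \<in> ED"
    show "iD (gE e) = gV (iD e) \<and> tD (gE e) = gV (tD e) \<and> gE (barD e) = barD (gE e)"
    proof (cases e)
      case (Inl a)
      then have a: "a \<in> E" using e ED_def by auto
      have "bar (fE a) = fE (bar a)" using fcomm a by simp
      moreover have "fE a \<in> T \<longleftrightarrow> a \<in> T" "fE (bar a) \<in> S \<longleftrightarrow> bar a \<in> S"
        "fE a \<in> S \<longleftrightarrow> a \<in> S" "fE (bar a) \<in> T \<longleftrightarrow> bar a \<in> T"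
        using T_f_iff S_f_iff a grE by auto
      ultimately show ?thesis using Inl a fcomm unfolding iD_def tD_def gE_def gV_def barD_def by auto
    next
      case (Inr p) then show ?thesis unfolding iD_def tD_def gE_def gV_def barD_def by (cases p) auto
    qed
  qed
  show ?thesis unfolding is_aut_def using b1 b2 c by blast
qed

lemma F1_forest: "is_forest ED iD tD barD F1"
  by (rule leaf_forest[OF D_graph, where W = "range Inr"])
     (auto simp: F1_def ED_def iD_def tD_def barD_def split: if_splits)

lemma F1_inv: "gE ` F1 \<subseteq> F1"
  unfolding gE_def F1_def using fV_V by auto

lemma F2_props: "F2 \<subseteq> ED" "barD ` F2 \<subseteq> F2"
  "\<forall>e\<in>F2. (iD e \<in> range Inr) \<noteq> (tD e \<in> range Inr)"
  "\<forall>e\<in>F2. \<forall>e'\<in>F2. iD e \<in> range Inr \<longrightarrow> iD e' = iD e \<longrightarrow> e' = e"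
proof -
  show "F2 \<subseteq> ED" unfolding F2_def ED_def using T_E grE by auto
  show "barD ` F2 \<subseteq> F2" unfolding F2_def barD_def using T_E grE by force
  have v: "e \<in> T \<Longrightarrow> iD (Inl e) = Inr (\<iota> e) \<and> tD (Inl e) = Inl (\<tau> e)" for e
    unfolding iD_def tD_def using ST TbT by auto
  have w: "e \<in> T \<Longrightarrow> iD (Inl (bar e)) = Inl (\<iota> (bar e)) \<and> tD (Inl (bar e)) = Inr (\<tau> (bar e))" for e
    unfolding iD_def tD_def using ST TbT T_E grE by (auto, metis subsetD)
  show "\<forall>e\<in>F2. (iD e \<in> range Inr) \<noteq> (tD e \<in> range Inr)"
    unfolding F2_def using v w by auto
  show "\<forall>e\<in>F2. \<forall>e'\<in>F2. iD e \<in> range Inr \<longrightarrow> iD e' = iD e \<longrightarrow> e' = e"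
    unfolding F2_def using v w iota_T_inj by auto
qed

lemma F2_forest: "is_forest ED iD tD barD F2"
  using leaf_forest[OF D_graph F2_props(1,2) F2_props(3,4)] .

lemma F2_inv: "gE ` F2 \<subseteq> F2"
proof
  fix y assume "y \<in> gE ` F2"
  then obtain z where z: "z \<in> F2" "y = gE z" by blast
  then obtain e where e: "e \<in> T \<union> bar ` T" "z = Inl e" unfolding F2_def by blast
  then have e: "e \<in> T \<union> bar ` T" "y = Inl (fE e)" using z unfolding gE_def by auto
  show "y \<in> F2"
  proof (cases "e \<in> T")
    case True then show ?thesis using e T_f unfolding F2_def by auto
  next
    case False
    then obtain e' where e': "e' \<in> T" "e = bar e'" using e by auto
    then have "fE e = bar (fE e')" using fcomm T_E by auto
    then show ?thesis using e e' T_f unfolding F2_def by auto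
  qed
qed

end



context wh_ctx begin

definition pV1 :: "'v + 'v \<Rightarrow> 'v" where "pV1 = case_sum id id"
definition pE1 :: "'e + ('v \<times> bool) \<Rightarrow> 'e" where "pE1 = case_sum id (\<lambda>_. s)"
definition pV2 :: "'v + 'v \<Rightarrow> 'v" where "pV2 = case_sum id (\<lambda>x. \<tau> (tx x))"
definition pE2 :: "'e + ('v \<times> bool) \<Rightarrow> 'e" where
  "pE2 = case_sum id (\<lambda>(x, b). if b then bar (tx x) else tx x)"
definition tau' where "tau' e = (if e \<in> S then \<tau> (tx (\<tau> e)) else \<tau> e)"
definition iota' where "iota' e = tau' (bar e)"

lemma F1_props: "F1 \<subseteq> ED" "barD ` F1 \<subseteq> F1" "\<forall>e\<in>F1. (iD e \<in> range Inr) \<noteq> (tD e \<in> range Inr)"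
proof -
  show "F1 \<subseteq> ED" unfolding F1_def ED_def by blast
  show "barD ` F1 \<subseteq> F1" unfolding F1_def barD_def by force
  show "\<forall>e\<in>F1. (iD e \<in> range Inr) \<noteq> (tD e \<in> range Inr)"
  proof
    fix e assume "e \<in> F1"
    then obtain x b where "e = Inr (x, b)" unfolding F1_def by blast
    then show "(iD e \<in> range Inr) \<noteq> (tD e \<in> range Inr)" unfolding iD_def tD_def by (cases b) auto
  qed
qed

lemma collapse1: "eq_collapse VD ED iD tD barD gV gE F1 V E \<iota> \<tau> bar fV fE pV1 pE1"
proof -
  have paths: "\<forall>x\<in>VD. \<forall>y\<in>VD. pV1 x = pV1 y \<longleftrightarrow> (\<exists>es. set es \<subseteq> F1 \<and> epath iD tD x es y)"
  proof (rule leaf_paths[OF D_graph F1_props])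
    show "\<forall>x\<in>VD. x \<in> range Inr \<longrightarrow> (\<exists>e\<in>F1. iD e = x)"
      unfolding VD_def F1_def iD_def by (auto intro!: bexI[of _ "Inr (_, True)"])
    show "\<forall>e\<in>F1. pV1 (iD e) = pV1 (tD e)" unfolding F1_def iD_def tD_def pV1_def by auto
    show "\<forall>x\<in>VD. \<forall>y\<in>VD. x \<notin> range Inr \<longrightarrow> y \<notin> range Inr \<longrightarrow> pV1 x = pV1 y \<longrightarrow> x = y"
      unfolding VD_def pV1_def by auto
  qed
  have diff: "ED - F1 = Inl ` E" unfolding ED_def F1_def by auto
  have c: "pE1 \<circ> Inl = id" by (simp add: pE1_def fun_eq_iff)
  have "pE1 ` Inl ` E = E" by (simp add: image_comp c)
  then have bij: "bij_betw pE1 (ED - F1) E" unfolding diff bij_betw_def inj_on_def pE1_def by auto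
  have im: "pV1 ` VD = V" unfolding VD_def pV1_def by force
  have ed: "\<forall>e\<in>ED - F1. \<iota> (pE1 e) = pV1 (iD e) \<and> \<tau> (pE1 e) = pV1 (tD e) \<and> bar (pE1 e) = pE1 (barD e)"
  proof
    fix e assume "e \<in> ED - F1"
    then obtain a where a: "e = Inl a" unfolding diff by blast
    show "\<iota> (pE1 e) = pV1 (iD e) \<and> \<tau> (pE1 e) = pV1 (tD e) \<and> bar (pE1 e) = pE1 (barD e)"
      unfolding a pE1_def pV1_def iD_def tD_def barD_def by simp
  qed
  have ev: "\<forall>x\<in>VD. pV1 (gV x) = fV (pV1 x)"
  proof
    fix x :: "'v + 'v" show "pV1 (gV x) = fV (pV1 x)" unfolding pV1_def gV_def by (cases x) simp_all
  qed
  have ee: "\<forall>e\<in>ED - F1. pE1 (gE e) = fE (pE1 e)"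
  proof
    fix e assume "e \<in> ED - F1"
    then obtain a where a: "e = Inl a" unfolding diff by blast
    show "pE1 (gE e) = fE (pE1 e)" unfolding a pE1_def gE_def by simp
  qed
  show ?thesis unfolding eq_collapse_def using im paths bij ed ev ee by blast
qed

lemma tx_notS: "x \<in> V \<Longrightarrow> tx x \<notin> S \<and> bar (tx x) \<notin> S \<and> bar (tx x) \<notin> T \<and> tx x \<in> E"
proof -
  assume x: "x \<in> V"
  have a: "tx x \<in> T" using tx x by blast
  then have b: "tx x \<in> E" using T_E by blast
  have "bar (bar (tx x)) = tx x" using grE b by blast
  then show ?thesis using a b ST SbT TbT by metis
qed

lemma F2_ex: "\<forall>x\<in>VD. x \<in> range Inr \<longrightarrow> (\<exists>e\<in>F2. iD e = x)"
proof (intro ballI impI)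
  fix x assume "x \<in> VD" "x \<in> range Inr"
  then obtain y where y: "y \<in> V" "x = Inr y" unfolding VD_def by auto
  have "Inl (tx y) \<in> F2" using tx y unfolding F2_def by auto
  moreover have "iD (Inl (tx y)) = x" using tx y unfolding iD_def by auto
  ultimately show "\<exists>e\<in>F2. iD e = x" by blast
qed

lemma F2_peq: "\<forall>e\<in>F2. pV2 (iD e) = pV2 (tD e)"
proof
  fix e assume "e \<in> F2"
  then obtain a where a: "e = Inl a" "a \<in> T \<union> bar ` T" unfolding F2_def by auto
  show "pV2 (iD e) = pV2 (tD e)"
  proof (cases "a \<in> T")
    case True
    then have "iD e = Inr (\<iota> a)" "tD e = Inl (\<tau> a)" unfolding iD_def tD_def a using ST TbT by auto
    then show ?thesis unfolding pV2_def using tx_iota True by simp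
  next
    case False
    then obtain b where b: "b \<in> T" "a = bar b" using a by auto
    then have bE: "b \<in> E" using T_E by auto
    have "iD e = Inl (\<tau> b)" "tD e = Inr (\<iota> b)" unfolding iD_def tD_def a using ST TbT b grE[OF bE] by auto
    then show ?thesis unfolding pV2_def using tx_iota b by simp
  qed
qed

lemma collapse2: "eq_collapse VD ED iD tD barD gV gE F2 V E iota' tau' bar fV fE pV2 pE2"
proof -
  have paths: "\<forall>x\<in>VD. \<forall>y\<in>VD. pV2 x = pV2 y \<longleftrightarrow> (\<exists>es. set es \<subseteq> F2 \<and> epath iD tD x es y)"
  proof (rule leaf_paths[OF D_graph F2_props(1,2,3) F2_ex F2_peq])
    show "\<forall>x\<in>VD. \<forall>y\<in>VD. x \<notin> range Inr \<longrightarrow> y \<notin> range Inr \<longrightarrow> pV2 x = pV2 y \<longrightarrow> x = y"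
      unfolding VD_def pV2_def by auto
  qed
  have diff: "ED - F2 = Inl ` (E - T - bar ` T) \<union> Inr ` (V \<times> UNIV)" unfolding ED_def F2_def by auto
  have im: "pV2 ` VD = V"
  proof
    show "pV2 ` VD \<subseteq> V" unfolding VD_def pV2_def using tx_notS grE by auto
    show "V \<subseteq> pV2 ` VD" unfolding VD_def pV2_def by (auto intro!: image_eqI[of _ _ "Inl _"])
  qed
  define q where "q e = (if e \<in> T then Inr (\<iota> e, False) else if bar e \<in> T then Inr (\<tau> e, True) else Inl e)" for e
  have qp: "q (pE2 x) = x" if x: "x \<in> ED - F2" for x
  proof (cases x)
    case (Inl a)
    then have a: "a \<in> E" "a \<notin> T" "a \<notin> bar ` T" using x unfolding diff by auto
    have "bar a \<notin> T" using a grE by (metis image_eqI)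
    then show ?thesis using a Inl unfolding q_def pE2_def by simp
  next
    case (Inr p)
    then obtain z b where p: "x = Inr (z, b)" "z \<in> V" using x unfolding diff by auto
    have h: "tx z \<in> T" "bar (tx z) \<notin> T" "tx z \<in> E" "\<iota> (tx z) = z" using tx_notS tx p by auto
    show ?thesis using h grE[OF h(3)] p unfolding q_def pE2_def by (cases b) simp_all
  qed
  have inj: "inj_on pE2 (ED - F2)" by (rule inj_on_inverseI[of _ q]) (rule qp)
  have surj: "pE2 ` (ED - F2) = E"
  proof
    show "pE2 ` (ED - F2) \<subseteq> E" unfolding diff pE2_def using tx_notS grE by auto
    show "E \<subseteq> pE2 ` (ED - F2)"
    proof
      fix e assume e: "e \<in> E"
      show "e \<in> pE2 ` (ED - F2)"
      proof (cases "e \<in> T")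
        case True
        then have "pE2 (Inr (\<iota> e, False)) = e" "Inr (\<iota> e, False) \<in> ED - F2"
          unfolding pE2_def diff using tx_iota grE e by auto
        then show ?thesis by (metis image_eqI)
      next
        case nT: False
        show ?thesis
        proof (cases "e \<in> bar ` T")
          case True
          then obtain b where b: "b \<in> T" "e = bar b" by auto
          then have "pE2 (Inr (\<iota> b, True)) = e" "Inr (\<iota> b, True) \<in> ED - F2"
            unfolding pE2_def diff using tx_iota grE T_E by auto
          then show ?thesis by (metis image_eqI)
        next
          case False
          then have "pE2 (Inl e) = e" "Inl e \<in> ED - F2" unfolding pE2_def diff using e nT by auto
          then show ?thesis by (metis image_eqI)
        qed
      qed
    qed
  qed
  have bij: "bij_betw pE2 (ED - F2) E" unfolding bij_betw_def using inj surj by blast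
  have edges: "\<forall>e\<in>ED - F2. iota' (pE2 e) = pV2 (iD e) \<and> tau' (pE2 e) = pV2 (tD e) \<and> bar (pE2 e) = pE2 (barD e)"
  proof
    fix e assume e: "e \<in> ED - F2"
    show "iota' (pE2 e) = pV2 (iD e) \<and> tau' (pE2 e) = pV2 (tD e) \<and> bar (pE2 e) = pE2 (barD e)"
    proof (cases e)
      case (Inl a)
      then have a: "a \<in> E" "a \<notin> T" "a \<notin> bar ` T" using e unfolding diff by auto
      have "bar a \<notin> T" using a grE by (metis image_eqI)
      then show ?thesis using a grE[OF a(1)] Inl
        unfolding iota'_def tau'_def pE2_def pV2_def iD_def tD_def barD_def by simp
    next
      case (Inr p)
      then obtain x b where p: "e = Inr (x, b)" "x \<in> V" using e unfolding diff by auto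
      have h: "tx x \<notin> S" "bar (tx x) \<notin> S" "tx x \<in> E" "\<iota> (tx x) = x" using tx_notS tx p by auto
      show ?thesis using h grE[OF h(3)] p
        unfolding iota'_def tau'_def pE2_def pV2_def iD_def tD_def barD_def by (cases b) simp_all
    qed
  qed
  have eqV: "\<forall>x\<in>VD. pV2 (gV x) = fV (pV2 x)"
  proof
    fix x assume "x \<in> VD"
    then show "pV2 (gV x) = fV (pV2 x)" unfolding VD_def pV2_def gV_def
      using tx_f tx_notS fcomm by auto
  qed
  have eqE: "\<forall>e\<in>ED - F2. pE2 (gE e) = fE (pE2 e)"
  proof
    fix e assume "e \<in> ED - F2"
    then show "pE2 (gE e) = fE (pE2 e)" unfolding diff pE2_def gE_def
      using tx_f tx_notS fcomm by auto
  qed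
  show ?thesis unfolding eq_collapse_def using im paths bij edges eqV eqE by blast
qed

lemma main:
  "\<exists>\<iota>' \<tau>'.
     (\<forall>k. \<tau>' ((fE ^^ k) s) = \<tau> ((fE ^^ k) t)) \<and>
     (\<forall>e\<in>E. (\<forall>k. e \<noteq> (fE ^^ k) s) \<longrightarrow> \<tau>' e = \<tau> e) \<and>
     (\<forall>e\<in>E. \<iota>' e = \<tau>' (bar e)) \<and>
     eq_whitehead_move V E \<iota> \<tau> bar fV fE V E \<iota>' \<tau>' bar fV fE"
proof (intro exI conjI)
  show "\<forall>k. tau' ((fE ^^ k) s) = \<tau> ((fE ^^ k) t)"
  proof
    fix k
    have "(fE ^^ k) s \<in> S" unfolding S_def by auto
    moreover have "\<tau> ((fE ^^ k) s) = \<iota> ((fE ^^ k) t)" using fkcomm st path by simp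
    moreover have "(fE ^^ k) t \<in> T" unfolding T_def by auto
    ultimately show "tau' ((fE ^^ k) s) = \<tau> ((fE ^^ k) t)" unfolding tau'_def using tx_iota by simp
  qed
  show "\<forall>e\<in>E. (\<forall>k. e \<noteq> (fE ^^ k) s) \<longrightarrow> tau' e = \<tau> e" unfolding tau'_def S_def by auto
  show "\<forall>e\<in>E. iota' e = tau' (bar e)" unfolding iota'_def by simp
  show "eq_whitehead_move V E \<iota> \<tau> bar fV fE V E iota' tau' bar fV fE"
    by (rule transport_whitehead[OF D_finite D_graph D_aut F1_forest F1_inv F2_forest F2_inv collapse1 collapse2])
qed

end

theorem lemma6p4:
  fixes V :: "'v set" and E :: "'e set" and \<iota> \<tau> :: "'e \<Rightarrow> 'v" and bar :: "'e \<Rightarrow> 'e"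
    and fV :: "'v \<Rightarrow> 'v" and fE :: "'e \<Rightarrow> 'e" and s t :: 'e
  assumes fin: "finite V" "finite E"
    and gr: "is_graph V E \<iota> \<tau> bar"
    and conn: "connected_graph V E \<iota> \<tau>"
    and aut: "is_aut V E \<iota> \<tau> bar fV fE"
    and free: "acts_freely V E bar fV fE"
    and one_orbit: "\<exists>v0\<in>V. V = {(fV ^^ k) v0 | k. True}"
    and st: "s \<in> E" "t \<in> E"
    and distinct_orbits: "\<forall>k. (fE ^^ k) t \<noteq> s \<and> (fE ^^ k) (bar t) \<noteq> s"
    and path: "\<tau> s = \<iota> t"
  shows "\<exists>\<iota>' \<tau>'.
     (\<forall>k. \<tau>' ((fE ^^ k) s) = \<tau> ((fE ^^ k) t)) \<and>
     (\<forall>e\<in>E. (\<forall>k. e \<noteq> (fE ^^ k) s) \<longrightarrow> \<tau>' e = \<tau> e) \<and>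
     (\<forall>e\<in>E. \<iota>' e = \<tau>' (bar e)) \<and>
     eq_whitehead_move V E \<iota> \<tau> bar fV fE V E \<iota>' \<tau>' bar fV fE"
  proof -
  interpret wh_ctx V E \<iota> \<tau> bar fV fE s t
    using assms by (unfold_locales) auto
  show ?thesis by (rule main)
qed

end
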